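(* Let $1\le k\le N-1$ satisfy $\phi^{k-1}-\phi^k>\phi^k-\phi^{k+1}$, let $F\in\tilde{\mathcal F}^k$, let $\mathcal U$ be an atom of $\mathfrak A_k$, and let $\delta$ be a root of $F$ with $\mathcal U\subseteq\mathcal VT^F_\delta$. Then there exist a set $\mathcal D\subseteq\mathcal VT^F_\delta$ and a forest $G\in\tilde{\mathcal F}^k$ such that the arcs leaving the vertices of $\mathcal N\setminus\mathcal D$ are the same in $G$ and in $F$, $\mathcal U\subseteq\mathcal VT^G_\delta$, and $\mathcal N^{in}_{\mathcal U}(G)=\emptyset$ (no arc of $G$ enters $\mathcal U$).
   Context: $V$ is a digraph with vertex set $\mathcal N$, $|\mathcal N|=N$, real arc weights, having at least one spanning tree. An (entering) forest is a digraph in which every vertex has at most one outgoing arc and there is no directed cycle; its weakly connected components are trees, each with a root (the unique vertex with no outgoing arc). For a root $\delta$ of $F$, $T^F_\delta$ denotes the tree of $F$ containing $\delta$. $\mathcal F^k$ is the set of spanning forests of $V$ with exactly $k$ trees; $\Upsilon^F$ is total arc weight; $\phi^k=\min_{\mathcal F^k}\Upsilon^F$, $\phi^0=\infty$; $\tilde{\mathcal F}^k$ the forests in $\mathcal F^k$ of weight $\phi^k$. $\mathfrak A_k$ is the algebra of subsets of $\mathcal N$ generated by the vertex sets of trees of forests in $\tilde{\mathcal F}^k$; atoms are its minimal nonempty elements. $\mathcal N^{in}_{\mathcal U}(G)$ is the set of tails of arcs of $G$ whose head is in $\mathcal U$ and tail is not. *)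

theory Defs
  imports "HOL-Library.Extended_Real"
begin

text \<open>A weighted digraph is given by a finite vertex set N, an arc set E \<subseteq> N \<times> N
  (arcs are pairs (tail, head)) and a real weight function w on arcs.\<close>

definition is_forest :: "('a \<times> 'a) set \<Rightarrow> ('a \<times> 'a) set \<Rightarrow> bool" where
  "is_forest E F \<longleftrightarrow> F \<subseteq> E \<and> (\<forall>u v v'. (u, v) \<in> F \<longrightarrow> (u, v') \<in> F \<longrightarrow> v = v') \<and> acyclic F"

definition roots :: "'a set \<Rightarrow> ('a \<times> 'a) set \<Rightarrow> 'a set" where
  "roots N F = {v \<in> N. \<forall>u. (v, u) \<notin> F}"

definition forests :: "'a set \<Rightarrow> ('a \<times> 'a) set \<Rightarrow> nat \<Rightarrow> ('a \<times> 'a) set set" where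
  "forests N E k = {F. is_forest E F \<and> card (roots N F) = k}"

definition weight :: "('a \<times> 'a \<Rightarrow> real) \<Rightarrow> ('a \<times> 'a) set \<Rightarrow> real" where
  "weight w F = (\<Sum>a\<in>F. w a)"

text \<open>\<phi>^k = minimal weight over \<F>^k; infimum of the empty set is \<infinity> (so \<phi>^0 = \<infinity>).\<close>
definition phi :: "'a set \<Rightarrow> ('a \<times> 'a) set \<Rightarrow> ('a \<times> 'a \<Rightarrow> real) \<Rightarrow> nat \<Rightarrow> ereal" where
  "phi N E w k = (INF F\<in>forests N E k. ereal (weight w F))"

definition opt_forests :: "'a set \<Rightarrow> ('a \<times> 'a) set \<Rightarrow> ('a \<times> 'a \<Rightarrow> real) \<Rightarrow> nat \<Rightarrow> ('a \<times> 'a) set set" where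
  "opt_forests N E w k = {F \<in> forests N E k. ereal (weight w F) = phi N E w k}"

definition tree_vertices :: "'a set \<Rightarrow> ('a \<times> 'a) set \<Rightarrow> 'a \<Rightarrow> 'a set" where
  "tree_vertices N F \<delta> = {v \<in> N. (v, \<delta>) \<in> F\<^sup>*}"

inductive_set gen_alg :: "'a set \<Rightarrow> 'a set set \<Rightarrow> 'a set set" for N S where
  empty: "{} \<in> gen_alg N S"
| basic: "X \<in> S \<Longrightarrow> X \<in> gen_alg N S"
| compl: "X \<in> gen_alg N S \<Longrightarrow> N - X \<in> gen_alg N S"
| union: "X \<in> gen_alg N S \<Longrightarrow> Y \<in> gen_alg N S \<Longrightarrow> X \<union> Y \<in> gen_alg N S"

definition alg_k :: "'a set \<Rightarrow> ('a \<times> 'a) set \<Rightarrow> ('a \<times> 'a \<Rightarrow> real) \<Rightarrow> nat \<Rightarrow> 'a set set" where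
  "alg_k N E w k = gen_alg N {tree_vertices N F r | F r. F \<in> opt_forests N E w k \<and> r \<in> roots N F}"

definition is_atom :: "'a set set \<Rightarrow> 'a set \<Rightarrow> bool" where
  "is_atom A U \<longleftrightarrow> U \<in> A \<and> U \<noteq> {} \<and> (\<forall>W\<in>A. W \<noteq> {} \<longrightarrow> W \<subseteq> U \<longrightarrow> W = U)"

definition in_nbrs :: "'a set \<Rightarrow> ('a \<times> 'a) set \<Rightarrow> 'a set" where
  "in_nbrs U G = {u. \<exists>v. (u, v) \<in> G \<and> v \<in> U \<and> u \<notin> U}"

end

theory Submission
  imports Defs
begin


definition mix :: "'a set \<Rightarrow> ('a \<times> 'a) set \<Rightarrow> ('a \<times> 'a) set \<Rightarrow> ('a \<times> 'a) set" where
  "mix X H G = {a\<in>H. fst a \<in> X} \<union> {a\<in>G. fst a \<notin> X}"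

lemma mix_roots: "roots N (mix X H G) = (roots N H \<inter> X) \<union> (roots N G - X)"
  unfolding roots_def mix_def by auto

lemma mix_forest:
  assumes "is_forest E H" "is_forest E G" "acyclic (mix X H G)"
  shows "is_forest E (mix X H G)"
  using assms unfolding is_forest_def mix_def by auto

lemma mix_acyclic:
  assumes XZ: "X \<subseteq> Z" and C1: "\<forall>x y. (x,y)\<in>G \<longrightarrow> x\<notin>Z \<longrightarrow> y\<notin>Z"
    and C2: "\<forall>x y. (x,y)\<in>H \<longrightarrow> x\<in>X \<longrightarrow> y\<in>X \<or> y\<notin>Z"
    and aG: "acyclic G" and aH: "acyclic H"
  shows "acyclic (mix X H G)"
proof -
  let ?K = "mix X H G"
  have key: "(x\<notin>Z \<longrightarrow> y\<notin>Z \<and> (x,y)\<in>G\<^sup>+) \<and> (x\<in>X \<longrightarrow> y\<notin>Z \<or> (y\<in>X \<and> (x,y)\<in>H\<^sup>+))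
     \<and> (x\<in>Z-X \<longrightarrow> (y\<in>Z-X \<and> (x,y)\<in>G\<^sup>+) \<or> y\<in>X \<or> y\<notin>Z)" if "(x,y) \<in> ?K\<^sup>+" for x y
    using that
  proof (induction rule: trancl_induct)
    case (base y)
    then show ?case using XZ C1 C2 unfolding mix_def by auto
  next
    case (step y z)
    have yz: "(y,z) \<in> ?K" by fact
    show ?case
    proof (cases "y \<in> X")
      case True
      then have "(y,z) \<in> H" using yz unfolding mix_def by auto
      then show ?thesis using step.IH True C2 XZ by (auto intro: trancl_into_trancl)
    next
      case False
      then have g: "(y,z) \<in> G" using yz unfolding mix_def by auto
      then show ?thesis using step.IH False C1 XZ by (auto intro: trancl_into_trancl)
    qed
  qed
  show ?thesis unfolding acyclic_def
  proof (intro allI notI)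
    fix x assume "(x,x) \<in> ?K\<^sup>+"
    from key[OF this] show False using aG aH unfolding acyclic_def by blast
  qed
qed

locale ctx =
  fixes N :: "'a set" and E :: "('a \<times> 'a) set" and w :: "'a \<times> 'a \<Rightarrow> real" and k :: nat
  assumes finN: "finite N" and EN: "E \<subseteq> N \<times> N" and k1: "1 \<le> k"
    and gap: "phi N E w (k - 1) - phi N E w k > phi N E w k - phi N E w (k + 1)"
begin

abbreviation "opt \<equiv> opt_forests N E w k"

lemma forest_sub: "is_forest E G \<Longrightarrow> G \<subseteq> N \<times> N"
  using EN unfolding is_forest_def by auto

lemma forest_finite: "is_forest E G \<Longrightarrow> finite G"
  using forest_sub finN by (meson finite_SigmaI finite_subset)

lemma forest_fun: "is_forest E G \<Longrightarrow> (x,y)\<in>G \<Longrightarrow> (x,z)\<in>G \<Longrightarrow> y = z"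
  unfolding is_forest_def by blast

lemma forest_acyc: "is_forest E G \<Longrightarrow> acyclic G"
  unfolding is_forest_def by blast

lemma opt_forest: "G \<in> opt \<Longrightarrow> is_forest E G"
  unfolding opt_forests_def forests_def by auto

lemma opt_card: "G \<in> opt \<Longrightarrow> card (roots N G) = k"
  unfolding opt_forests_def forests_def by auto

lemma opt_phi: "G \<in> opt \<Longrightarrow> phi N E w k = ereal (weight w G)"
  unfolding opt_forests_def by auto

lemma phi_le: "K \<in> forests N E j \<Longrightarrow> phi N E w j \<le> ereal (weight w K)"
  unfolding phi_def by (rule INF_lower)

lemma roots_finite: "finite (roots N G)"
  using finN unfolding roots_def by auto

lemma weight_split: "finite G \<Longrightarrow> weight w G = weight w {a\<in>G. fst a \<in> X} + weight w {a\<in>G. fst a \<notin> X}"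
proof -
  assume f: "finite G"
  have "G = {a\<in>G. fst a \<in> X} \<union> {a\<in>G. fst a \<notin> X}" by auto
  then show ?thesis unfolding weight_def using f
    by (metis (no_types, lifting) sum.union_disjoint disjoint_iff finite_Un mem_Collect_eq)
qed

lemma weight_mix:
  assumes "is_forest E G" "is_forest E H"
  shows "weight w (mix X H G) + weight w (mix X G H) = weight w G + weight w H"
proof -
  have fG: "finite G" and fH: "finite H" using assms forest_finite by auto
  have d: "{a\<in>H. fst a \<in> X} \<inter> {a\<in>G. fst a \<notin> X} = {}" "{a\<in>G. fst a \<in> X} \<inter> {a\<in>H. fst a \<notin> X} = {}" by auto
  have "weight w (mix X H G) = weight w {a\<in>H. fst a \<in> X} + weight w {a\<in>G. fst a \<notin> X}"
    unfolding mix_def weight_def using fG fH d by (simp add: sum.union_disjoint)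
  moreover have "weight w (mix X G H) = weight w {a\<in>G. fst a \<in> X} + weight w {a\<in>H. fst a \<notin> X}"
    unfolding mix_def weight_def using fG fH d by (simp add: sum.union_disjoint)
  ultimately show ?thesis using weight_split[OF fG, of X] weight_split[OF fH, of X] by simp
qed

lemma mix_card:
  "card (roots N (mix X H G)) + card (roots N (mix X G H)) = card (roots N H) + card (roots N G)"
proof -
  have c: "card (A \<inter> X) + card (A - X) = card A" if "finite A" for A :: "'a set"
    using that by (metis Diff_Diff_Int card_Diff_subset_Int Int_lower1 card_Diff_subset finite_Int le_add_diff_inverse card_mono)
  have fin: "finite (roots N H)" "finite (roots N G)" by (auto intro: roots_finite)
  have "card (roots N (mix X H G)) = card (roots N H \<inter> X) + card (roots N G - X)"
    unfolding mix_roots using fin by (subst card_Un_disjoint) auto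
  moreover have "card (roots N (mix X G H)) = card (roots N G \<inter> X) + card (roots N H - X)"
    unfolding mix_roots using fin by (subst card_Un_disjoint) auto
  ultimately show ?thesis using c[OF fin(1)] c[OF fin(2)] by simp
qed

lemma gap_contra:
  assumes F: "F \<in> opt" and K1: "K1 \<in> forests N E (k+1)" and K2: "K2 \<in> forests N E (k-1)"
    and s: "weight w K1 + weight w K2 = 2 * weight w F"
  shows False
proof -
  have a: "phi N E w (k+1) \<le> ereal (weight w K1)" using phi_le[OF K1] .
  have b: "phi N E w (k-1) \<le> ereal (weight w K2)" using phi_le[OF K2] .
  have c: "phi N E w k = ereal (weight w F)" using opt_phi[OF F] .
  have "phi N E w (k - 1) - phi N E w k \<le> ereal (weight w K2) - ereal (weight w F)"
    unfolding c by (rule ereal_minus_mono[OF b order_refl])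
  also have "\<dots> = ereal (weight w F) - ereal (weight w K1)" using s by simp
  also have "\<dots> \<le> phi N E w k - phi N E w (k + 1)"
    unfolding c by (rule ereal_minus_mono[OF order_refl a])
  finally show False using gap by simp
qed

lemma opt_pair:
  assumes F: "F \<in> opt" and K1: "K1 \<in> forests N E k" and K2: "K2 \<in> forests N E k"
    and s: "weight w K1 + weight w K2 = 2 * weight w F"
  shows "K1 \<in> opt"
proof -
  have a: "weight w F \<le> weight w K1" using phi_le[OF K1] opt_phi[OF F] by simp
  have b: "weight w F \<le> weight w K2" using phi_le[OF K2] opt_phi[OF F] by simp
  have "weight w K1 = weight w F" using a b s by simp
  then show ?thesis using K1 opt_phi[OF F] unfolding opt_forests_def by simp
qed

lemma recomb:
  assumes G: "G \<in> opt" and H: "H \<in> opt"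
    and a1: "acyclic (mix X H G)" and a2: "acyclic (mix X G H)"
  shows "card (roots N (mix X H G)) \<noteq> k + 1" "card (roots N (mix X H G)) \<noteq> k - 1"
    "card (roots N (mix X H G)) = k \<Longrightarrow> mix X H G \<in> opt"
proof -
  have fG: "is_forest E G" and fH: "is_forest E H" using G H opt_forest by auto
  have f1: "is_forest E (mix X H G)" using mix_forest[OF fH fG a1] .
  have f2: "is_forest E (mix X G H)" using mix_forest[OF fG fH a2] .
  have cs: "card (roots N (mix X H G)) + card (roots N (mix X G H)) = 2 * k"
    using mix_card[of X H G] opt_card[OF G] opt_card[OF H] by simp
  have ws: "weight w (mix X H G) + weight w (mix X G H) = 2 * weight w G"
    using weight_mix[OF fG fH, of X] opt_phi[OF G] opt_phi[OF H] by simp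
  show "card (roots N (mix X H G)) \<noteq> k + 1"
  proof
    assume e: "card (roots N (mix X H G)) = k + 1"
    then have "card (roots N (mix X G H)) = k - 1" using cs by simp
    then show False using gap_contra[OF G, of "mix X H G" "mix X G H"] f1 f2 e ws
      unfolding forests_def by simp
  qed
  show "card (roots N (mix X H G)) \<noteq> k - 1"
  proof
    assume e: "card (roots N (mix X H G)) = k - 1"
    then have "card (roots N (mix X G H)) = k + 1" using cs k1 by simp
    then show False using gap_contra[OF G, of "mix X G H" "mix X H G"] f1 f2 e ws
      unfolding forests_def by (simp add: add.commute)
  qed
  assume e: "card (roots N (mix X H G)) = k"
  then have "card (roots N (mix X G H)) = k" using cs by simp
  then show "mix X H G \<in> opt" using opt_pair[OF G, of "mix X H G" "mix X G H"] f1 f2 e ws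
    unfolding forests_def by simp
qed



end


context ctx begin
lemma from_root: "(r,y) \<in> G\<^sup>* \<Longrightarrow> \<forall>u. (r,u)\<notin>G \<Longrightarrow> y = r"
  by (erule converse_rtranclE) auto

lemma root_unique:
  assumes f: "is_forest E G"
  shows "(v,r1) \<in> G\<^sup>* \<Longrightarrow> (v,r2) \<in> G\<^sup>* \<Longrightarrow> \<forall>u. (r1,u)\<notin>G \<Longrightarrow> \<forall>u. (r2,u)\<notin>G \<Longrightarrow> r1 = r2"
proof (induction v rule: converse_rtrancl_induct)
  case base
  then show ?case using from_root by metis
next
  case (step v v')
  from step.prems(1) have "(v',r2) \<in> G\<^sup>*"
  proof (cases rule: converse_rtranclE)
    case base
    then show ?thesis using step.hyps(1) step.prems(3) by auto
  next
    case (step z)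
    then show ?thesis using forest_fun[OF f] \<open>(v,v') \<in> G\<close> by metis
  qed
  then show ?case using step.IH step.prems by blast
qed

lemma exists_root:
  assumes f: "is_forest E G" and v: "v \<in> N"
  shows "\<exists>r\<in>roots N G. (v,r) \<in> G\<^sup>*"
proof -
  have wf: "wf (G\<inverse>)"
    using finite_acyclic_wf_converse forest_finite[OF f] forest_acyc[OF f] by blast
  show ?thesis using v
  proof (induction v rule: wf_induct_rule[OF wf])
    case (1 v)
    show ?case
    proof (cases "\<exists>y. (v,y) \<in> G")
      case True
      then obtain y where y: "(v,y) \<in> G" by blast
      then have "y \<in> N" using forest_sub[OF f] by auto
      with 1 y obtain r where "r \<in> roots N G" "(y,r) \<in> G\<^sup>*" by blast
      then show ?thesis using y by (meson converse_rtrancl_into_rtrancl)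
    next
      case False
      then show ?thesis using 1 unfolding roots_def by auto
    qed
  qed
qed

lemma tv_in: "is_forest E G \<Longrightarrow> (x,y)\<in>G \<Longrightarrow> y \<in> tree_vertices N G r \<Longrightarrow> x \<in> tree_vertices N G r"
  unfolding tree_vertices_def using forest_sub by (auto intro: converse_rtrancl_into_rtrancl)

lemma tv_out:
  assumes f: "is_forest E G" and r: "r \<in> roots N G" and x: "x \<in> tree_vertices N G r" and xy: "(x,y)\<in>G"
  shows "y \<in> tree_vertices N G r"
proof -
  have xr: "(x,r) \<in> G\<^sup>*" using x unfolding tree_vertices_def by auto
  then show ?thesis
  proof (cases rule: converse_rtranclE)
    case base
    then show ?thesis using r xy unfolding roots_def by auto
  next
    case (step z)
    then have "z = y" using forest_fun[OF f] xy by blast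
    then show ?thesis using step forest_sub[OF f] xy unfolding tree_vertices_def by auto
  qed
qed

lemma tv_root_self: "r \<in> roots N G \<Longrightarrow> r \<in> tree_vertices N G r"
  unfolding roots_def tree_vertices_def by auto

lemma tv_roots:
  assumes f: "is_forest E G" and r: "r \<in> roots N G"
  shows "roots N G \<inter> tree_vertices N G r = {r}"
proof -
  have "r' = r" if "r' \<in> roots N G" "r' \<in> tree_vertices N G r" for r'
  proof -
    have "(r',r) \<in> G\<^sup>*" "\<forall>u. (r',u)\<notin>G" using that unfolding roots_def tree_vertices_def by auto
    then show "r' = r" using from_root by metis
  qed
  then show ?thesis using tv_root_self[OF r] r by auto
qed

lemma tv_disj:
  assumes f: "is_forest E G" and r1: "r1 \<in> roots N G" and r2: "r2 \<in> roots N G" and ne: "r1 \<noteq> r2"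
  shows "tree_vertices N G r1 \<inter> tree_vertices N G r2 = {}"
  using root_unique[OF f] r1 r2 ne unfolding tree_vertices_def roots_def by blast

lemma one_root_ge:
  assumes G: "G \<in> opt" and H: "H \<in> opt" and r: "r \<in> roots N G"
  shows "roots N H \<inter> tree_vertices N G r \<noteq> {}"
proof
  assume e: "roots N H \<inter> tree_vertices N G r = {}"
  let ?A = "tree_vertices N G r"
  have fG: "is_forest E G" and fH: "is_forest E H" using G H opt_forest by auto
  have a1: "acyclic (mix ?A H G)"
    by (rule mix_acyclic[of ?A ?A]) (use tv_in[OF fG] forest_acyc[OF fG] forest_acyc[OF fH] in blast)+
  have a2: "acyclic (mix ?A G H)"
    by (rule mix_acyclic[of ?A UNIV]) (use tv_out[OF fG r] forest_acyc[OF fG] forest_acyc[OF fH] in blast)+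
  have "roots N (mix ?A H G) = roots N G - {r}"
    unfolding mix_roots using e tv_roots[OF fG r] by auto
  then have "card (roots N (mix ?A H G)) = k - 1"
    using opt_card[OF G] r roots_finite by simp
  then show False using recomb(2)[OF G H a1 a2] by simp
qed

lemma one_root:
  assumes G: "G \<in> opt" and H: "H \<in> opt" and r0: "r0 \<in> roots N G"
  shows "card (roots N H \<inter> tree_vertices N G r0) = 1"
proof (rule ccontr)
  assume ne: "card (roots N H \<inter> tree_vertices N G r0) \<noteq> 1"
  have fG: "is_forest E G" and fH: "is_forest E H" using G H opt_forest by auto
  let ?f = "\<lambda>r. card (roots N H \<inter> tree_vertices N G r)"
  have ge1: "?f r \<ge> 1" if "r \<in> roots N G" for r
    using one_root_ge[OF G H that] roots_finite by (simp add: Suc_leI card_gt_0_iff)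
  have ge2: "?f r0 \<ge> 2" using ge1[OF r0] ne by simp
  have un: "roots N H = (\<Union>r\<in>roots N G. roots N H \<inter> tree_vertices N G r)"
  proof
    show "roots N H \<subseteq> (\<Union>r\<in>roots N G. roots N H \<inter> tree_vertices N G r)"
    proof
      fix v assume v: "v \<in> roots N H"
      then have "v \<in> N" unfolding roots_def by auto
      then obtain r where "r \<in> roots N G" "(v,r) \<in> G\<^sup>*" using exists_root[OF fG] by blast
      then show "v \<in> (\<Union>r\<in>roots N G. roots N H \<inter> tree_vertices N G r)"
        using v \<open>v \<in> N\<close> unfolding tree_vertices_def by auto
    qed
  qed auto
  have "card (roots N H) = card (\<Union>r\<in>roots N G. roots N H \<inter> tree_vertices N G r)"
    by (rule arg_cong[OF un])
  also have "\<dots> = (\<Sum>r\<in>roots N G. ?f r)"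
    by (rule card_UN_disjoint) (use roots_finite tv_disj[OF fG] in auto)
  also have "\<dots> = ?f r0 + (\<Sum>r\<in>roots N G - {r0}. ?f r)"
    using roots_finite r0 by (simp add: sum.remove)
  also have "\<dots> \<ge> 2 + (\<Sum>r\<in>roots N G - {r0}. 1)"
    using ge2 ge1 by (intro add_mono sum_mono) auto
  finally have "card (roots N H) \<ge> 2 + (card (roots N G) - 1)"
    using r0 roots_finite by simp
  then show False using opt_card[OF G] opt_card[OF H] k1 by simp
qed

end


lemma alg_sub: "X \<in> gen_alg N S \<Longrightarrow> \<forall>Y\<in>S. Y \<subseteq> N \<Longrightarrow> X \<subseteq> N"
  by (induction rule: gen_alg.induct) auto

lemma alg_sat: "X \<in> gen_alg N S \<Longrightarrow> x \<in> N \<Longrightarrow> y \<in> N \<Longrightarrow> \<forall>Y\<in>S. (x\<in>Y \<longleftrightarrow> y\<in>Y) \<Longrightarrow> (x\<in>X \<longleftrightarrow> y\<in>X)"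
  by (induction rule: gen_alg.induct) auto

lemma alg_int:
  assumes "X \<in> gen_alg N S" "Y \<in> gen_alg N S" "X \<subseteq> N" "Y \<subseteq> N"
  shows "X \<inter> Y \<in> gen_alg N S"
proof -
  have "X \<inter> Y = N - ((N - X) \<union> (N - Y))" using assms by auto
  then show ?thesis using assms gen_alg.intros by metis
qed

context ctx begin

lemma gens_sub: "\<forall>Y\<in>{tree_vertices N F r | F r. F \<in> opt \<and> r \<in> roots N F}. Y \<subseteq> N"
  unfolding tree_vertices_def by auto

lemma atom_split:
  assumes atom: "is_atom (alg_k N E w k) U" and G: "G \<in> opt" and r: "r \<in> roots N G"
    and ne: "U \<inter> tree_vertices N G r \<noteq> {}"
  shows "U \<subseteq> tree_vertices N G r"
proof -
  let ?T = "tree_vertices N G r"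
  have T: "?T \<in> alg_k N E w k" unfolding alg_k_def using G r by (auto intro: gen_alg.basic)
  have U: "U \<in> alg_k N E w k" using atom unfolding is_atom_def by auto
  have UN: "U \<subseteq> N" using alg_sub[OF U[unfolded alg_k_def] gens_sub] .
  have TN: "?T \<subseteq> N" unfolding tree_vertices_def by auto
  have "U \<inter> ?T \<in> alg_k N E w k" using alg_int[OF U[unfolded alg_k_def] T[unfolded alg_k_def] UN TN]
    unfolding alg_k_def .
  then have "U \<inter> ?T = U" using atom ne unfolding is_atom_def by auto
  then show ?thesis by auto
qed

lemma atom_sep:
  assumes atom: "is_atom (alg_k N E w k) U" and p: "p \<in> N" "p \<notin> U"
  shows "\<exists>H s. H \<in> opt \<and> s \<in> roots N H \<and> U \<subseteq> tree_vertices N H s \<and> p \<notin> tree_vertices N H s"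
proof -
  have U: "U \<in> alg_k N E w k" and Une: "U \<noteq> {}" using atom unfolding is_atom_def by auto
  have UN: "U \<subseteq> N" using alg_sub[OF U[unfolded alg_k_def] gens_sub] .
  obtain u where u: "u \<in> U" using Une by auto
  have uN: "u \<in> N" using u UN by auto
  have "\<not> (\<forall>Y\<in>{tree_vertices N F r | F r. F \<in> opt \<and> r \<in> roots N F}. (u\<in>Y \<longleftrightarrow> p\<in>Y))"
    using alg_sat[OF U[unfolded alg_k_def] uN p(1)] u p(2) by blast
  then obtain H r where H: "H \<in> opt" and r: "r \<in> roots N H"
    and d: "\<not> (u \<in> tree_vertices N H r \<longleftrightarrow> p \<in> tree_vertices N H r)" by blast
  have fH: "is_forest E H" using H opt_forest by auto
  show ?thesis
  proof (cases "u \<in> tree_vertices N H r")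
    case True
    then have "U \<subseteq> tree_vertices N H r" using atom_split[OF atom H r] u by blast
    then show ?thesis using H r d True by blast
  next
    case False
    then have pin: "p \<in> tree_vertices N H r" using d by blast
    obtain s where s: "s \<in> roots N H" "(u,s) \<in> H\<^sup>*" using exists_root[OF fH uN] by blast
    have us: "u \<in> tree_vertices N H s" using s uN unfolding tree_vertices_def by auto
    have Us: "U \<subseteq> tree_vertices N H s" using atom_split[OF atom H s(1)] u us by blast
    have "r \<noteq> s" using False us by blast
    then have "p \<notin> tree_vertices N H s" using tv_disj[OF fH r s(1)] pin by blast
    then show ?thesis using H s Us by blast
  qed
qed

lemma in_nbrs_sub: "is_forest E G \<Longrightarrow> in_nbrs U G \<subseteq> N"
  unfolding in_nbrs_def using forest_sub by blast

lemma step: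
  assumes atom: "is_atom (alg_k N E w k) U" and G: "G \<in> opt" and d: "\<delta> \<in> roots N G"
    and UA: "U \<subseteq> tree_vertices N G \<delta>" and p: "p \<in> in_nbrs U G"
  shows "\<exists>G'. G' \<in> opt \<and> {a\<in>G'. fst a \<notin> tree_vertices N G \<delta>} = {a\<in>G. fst a \<notin> tree_vertices N G \<delta>}
     \<and> \<delta> \<in> roots N G' \<and> U \<subseteq> tree_vertices N G' \<delta> \<and> in_nbrs U G' \<subset> in_nbrs U G"
proof -
  have fG: "is_forest E G" using G opt_forest by auto
  obtain q where pq: "(p,q) \<in> G" and qU: "q \<in> U" and pU: "p \<notin> U" using p unfolding in_nbrs_def by auto
  have pN: "p \<in> N" and qN: "q \<in> N" using pq forest_sub[OF fG] by auto
  obtain H s where H: "H \<in> opt" and s: "s \<in> roots N H" and UB: "U \<subseteq> tree_vertices N H s"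
    and pB: "p \<notin> tree_vertices N H s" using atom_sep[OF atom pN pU] by blast
  have fH: "is_forest E H" using H opt_forest by auto
  define A where "A = tree_vertices N G \<delta>"
  define B where "B = tree_vertices N H s"
  define S where "S = {x. (x,p) \<in> G\<^sup>*}"
  define X where "X = S - B"
  have qA: "q \<in> A" using UA qU unfolding A_def by auto
  have pA: "p \<in> A" using tv_in[OF fG pq] qA unfolding A_def by auto
  have SN: "x \<in> N" if "x \<in> S" for x
  proof -
    have "(x,p) \<in> G\<^sup>*" using that unfolding S_def by auto
    then show ?thesis by (cases rule: converse_rtranclE) (use pN forest_sub[OF fG] in auto)
  qed
  have SA: "S \<subseteq> A"
  proof
    fix x assume x: "x \<in> S"
    have "(p,\<delta>) \<in> G\<^sup>*" using pA unfolding A_def tree_vertices_def by auto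
    then have "(x,\<delta>) \<in> G\<^sup>*" using x unfolding S_def by auto
    then show "x \<in> A" using SN[OF x] unfolding A_def tree_vertices_def by auto
  qed
  have rootS: "r \<notin> S" if "r \<in> roots N G" for r
  proof
    assume "r \<in> S"
    then have "(r,p) \<in> G\<^sup>*" unfolding S_def by auto
    then have "p = r" using from_root that unfolding roots_def by auto
    then show False using that pq unfolding roots_def by auto
  qed
  have qS: "q \<notin> S"
  proof
    assume "q \<in> S"
    then have "(p,p) \<in> G\<^sup>+" using pq unfolding S_def by auto
    then show False using forest_acyc[OF fG] unfolding acyclic_def by blast
  qed
  have a1: "acyclic (mix X H G)"
  proof (rule mix_acyclic[of X S])
    show "X \<subseteq> S" unfolding X_def by auto
    show "\<forall>x y. (x,y)\<in>G \<longrightarrow> x\<notin>S \<longrightarrow> y\<notin>S" unfolding S_def by (auto intro: converse_rtrancl_into_rtrancl)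
    show "\<forall>x y. (x,y)\<in>H \<longrightarrow> x\<in>X \<longrightarrow> y\<in>X \<or> y\<notin>S"
      using tv_in[OF fH] unfolding X_def B_def by blast
  qed (use forest_acyc fG fH in auto)
  have a2: "acyclic (mix X G H)"
  proof (rule mix_acyclic[of X "- B"])
    show "X \<subseteq> - B" unfolding X_def by auto
    show "\<forall>x y. (x,y)\<in>H \<longrightarrow> x\<notin>- B \<longrightarrow> y\<notin>- B" using tv_out[OF fH s] unfolding B_def by blast
    show "\<forall>x y. (x,y)\<in>G \<longrightarrow> x\<in>X \<longrightarrow> y\<in>X \<or> y\<notin>- B"
    proof (intro allI impI)
      fix x y assume xy: "(x,y)\<in>G" and x: "x \<in> X"
      show "y\<in>X \<or> y\<notin>- B"
      proof (cases "x = p")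
        case True
        then have "y = q" using forest_fun[OF fG] xy pq by blast
        then show ?thesis using qU UB unfolding B_def by auto
      next
        case False
        have "(x,p) \<in> G\<^sup>*" using x unfolding X_def S_def by auto
        then have "(y,p) \<in> G\<^sup>*"
        proof (cases rule: converse_rtranclE)
          case base then show ?thesis using False by simp
        next
          case (step z)
          then show ?thesis using forest_fun[OF fG] xy by metis
        qed
        then show ?thesis unfolding X_def S_def by auto
      qed
    qed
  qed (use forest_acyc fG fH in auto)
  define G' where "G' = mix X H G"
  have RGX: "roots N G \<inter> X = {}" using rootS unfolding X_def by auto
  have R1: "card (roots N H \<inter> A) = 1" using one_root[OF G H d] unfolding A_def .
  have XA: "X \<subseteq> A" using SA unfolding X_def by auto
  have RHX: "roots N H \<inter> X = {}"
  proof (rule ccontr)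
    assume ne: "roots N H \<inter> X \<noteq> {}"
    have "roots N H \<inter> X \<subseteq> roots N H \<inter> A" using XA by auto
    then have "card (roots N H \<inter> X) \<le> 1" using R1 card_mono roots_finite
      by (metis finite_Int)
    moreover have "card (roots N H \<inter> X) > 0" using ne roots_finite by (simp add: card_gt_0_iff)
    ultimately have c1: "card (roots N H \<inter> X) = 1" by simp
    have "roots N G' = (roots N H \<inter> X) \<union> roots N G" unfolding G'_def mix_roots using RGX by auto
    moreover have "card ((roots N H \<inter> X) \<union> roots N G) = card (roots N H \<inter> X) + card (roots N G)"
      by (rule card_Un_disjoint) (use roots_finite RGX in auto)
    ultimately have "card (roots N G') = 1 + k"
      using c1 opt_card[OF G] by simp
    then show False using recomb(1)[OF G H a1 a2] unfolding G'_def by simp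
  qed
  have RG': "roots N G' = roots N G" unfolding G'_def mix_roots using RGX RHX by auto
  have G'opt: "G' \<in> opt" using recomb(3)[OF G H a1 a2] RG' opt_card[OF G] unfolding G'_def by simp
  have fG': "is_forest E G'" using G'opt opt_forest by auto
  have agree: "{a\<in>G'. fst a \<notin> A} = {a\<in>G. fst a \<notin> A}" using XA unfolding G'_def mix_def by auto
  have dG': "\<delta> \<in> roots N G'" using RG' d by simp
  have keep: "(x,y) \<in> G\<^sup>* \<Longrightarrow> x \<notin> S \<Longrightarrow> (x,y) \<in> G'\<^sup>*" for x y
  proof (induction rule: converse_rtrancl_induct)
    case base then show ?case by simp
  next
    case (step x x')
    have "x \<notin> X" using step.prems unfolding X_def by auto
    then have "(x,x') \<in> G'" using step.hyps(1) unfolding G'_def mix_def by auto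
    moreover have "x' \<notin> S" using step.prems step.hyps(1) unfolding S_def
      by (auto intro: converse_rtrancl_into_rtrancl)
    ultimately show ?case using step.IH by (auto intro: converse_rtrancl_into_rtrancl)
  qed
  have "(q,\<delta>) \<in> G\<^sup>*" using qA unfolding A_def tree_vertices_def by auto
  then have "(q,\<delta>) \<in> G'\<^sup>*" using keep qS by blast
  then have "q \<in> tree_vertices N G' \<delta>" using qN unfolding tree_vertices_def by auto
  then have UG': "U \<subseteq> tree_vertices N G' \<delta>" using atom_split[OF atom G'opt dG'] qU by blast
  have sub: "in_nbrs U G' \<subseteq> in_nbrs U G"
  proof
    fix x assume "x \<in> in_nbrs U G'"
    then obtain y where xy: "(x,y) \<in> G'" "y \<in> U" "x \<notin> U" unfolding in_nbrs_def by auto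
    show "x \<in> in_nbrs U G"
    proof (cases "x \<in> X")
      case True
      then have "(x,y) \<in> H" using xy unfolding G'_def mix_def by auto
      then have "x \<in> B" using tv_in[OF fH] xy(2) UB unfolding B_def by blast
      then show ?thesis using True unfolding X_def by auto
    next
      case False
      then have "(x,y) \<in> G" using xy unfolding G'_def mix_def by auto
      then show ?thesis using xy unfolding in_nbrs_def by auto
    qed
  qed
  have pX: "p \<in> X" using pB unfolding X_def S_def B_def by auto
  have "p \<notin> in_nbrs U G'"
  proof
    assume "p \<in> in_nbrs U G'"
    then obtain y where xy: "(p,y) \<in> G'" "y \<in> U" unfolding in_nbrs_def by auto
    then have "(p,y) \<in> H" using pX unfolding G'_def mix_def by auto
    then have "p \<in> B" using tv_in[OF fH] xy(2) UB unfolding B_def by blast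
    then show False using pX unfolding X_def by auto
  qed
  then have "in_nbrs U G' \<subset> in_nbrs U G" using sub p by auto
  then show ?thesis using G'opt agree dG' UG' unfolding A_def by blast
qed

lemma tvsub:
  assumes fF: "is_forest E F" and fG: "is_forest E G"
    and ag: "{a\<in>G. fst a \<in> N - tree_vertices N F \<delta>} = {a\<in>F. fst a \<in> N - tree_vertices N F \<delta>}"
    and dF: "\<delta> \<in> roots N F"
  shows "tree_vertices N G \<delta> \<subseteq> tree_vertices N F \<delta>"
proof
  let ?T = "tree_vertices N F \<delta>"
  have claim: "(x,y) \<in> G\<^sup>* \<Longrightarrow> x \<in> N \<Longrightarrow> x \<notin> ?T \<Longrightarrow> y \<notin> ?T" for x y
  proof (induction rule: converse_rtrancl_induct)
    case base then show ?case by simp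
  next
    case (step x x')
    have "(x,x') \<in> {a\<in>G. fst a \<in> N - ?T}" using step.hyps(1) step.prems by auto
    then have xx: "(x,x') \<in> F" unfolding ag by auto
    have x'N: "x' \<in> N" using forest_sub[OF fF] xx by auto
    have "x' \<notin> ?T"
    proof
      assume "x' \<in> ?T"
      then have "x \<in> ?T" using tv_in[OF fF xx] by blast
      then show False using step.prems by simp
    qed
    then show ?case using step.IH x'N by blast
  qed
  fix x assume x: "x \<in> tree_vertices N G \<delta>"
  then have "(x,\<delta>) \<in> G\<^sup>*" "x \<in> N" unfolding tree_vertices_def by auto
  moreover have "\<delta> \<in> ?T" using tv_root_self[OF dF] .
  ultimately show "x \<in> ?T" using claim by blast
qed

end



theorem theorem4:
  fixes N :: "'a set" and E :: "('a \<times> 'a) set" and w :: "'a \<times> 'a \<Rightarrow> real"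
    and k :: nat and F :: "('a \<times> 'a) set" and U :: "'a set" and \<delta> :: 'a
  assumes "finite N" and "E \<subseteq> N \<times> N"
    and "forests N E 1 \<noteq> {}"
    and "1 \<le> k" and "k \<le> card N - 1"
    and "phi N E w (k - 1) - phi N E w k > phi N E w k - phi N E w (k + 1)"
    and "F \<in> opt_forests N E w k"
    and "is_atom (alg_k N E w k) U"
    and "\<delta> \<in> roots N F" and "U \<subseteq> tree_vertices N F \<delta>"
  shows "\<exists>D G. D \<subseteq> tree_vertices N F \<delta> \<and> G \<in> opt_forests N E w k
      \<and> {a \<in> G. fst a \<in> N - D} = {a \<in> F. fst a \<in> N - D}
      \<and> \<delta> \<in> roots N G \<and> U \<subseteq> tree_vertices N G \<delta> \<and> in_nbrs U G = {}"
proof -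
  interpret ctx N E w k using assms(1,2,4,6) by unfold_locales auto
  note F = assms(7) and atom = assms(8) and dF = assms(9)
  have fF: "is_forest E F" using F opt_forest by auto
  let ?T = "tree_vertices N F \<delta>"
  define P where "P G \<longleftrightarrow> G \<in> opt \<and> {a\<in>G. fst a \<in> N - ?T} = {a\<in>F. fst a \<in> N - ?T}
      \<and> \<delta> \<in> roots N G \<and> U \<subseteq> tree_vertices N G \<delta>" for G
  have ind: "card (in_nbrs U G) = n \<Longrightarrow> P G \<Longrightarrow> \<exists>G'. P G' \<and> in_nbrs U G' = {}" for n G
  proof (induction n arbitrary: G rule: less_induct)
    case (less n G)
    show ?case
    proof (cases "in_nbrs U G = {}")
      case True
      then show ?thesis using less.prems by blast
    next
      case False
      then obtain p where p: "p \<in> in_nbrs U G" by blast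
      have G: "G \<in> opt" and ag: "{a\<in>G. fst a \<in> N - ?T} = {a\<in>F. fst a \<in> N - ?T}"
        and d: "\<delta> \<in> roots N G" and UA: "U \<subseteq> tree_vertices N G \<delta>"
        using less.prems unfolding P_def by auto
      have fG: "is_forest E G" using G opt_forest by auto
      obtain G' where G': "G' \<in> opt"
        and ag': "{a\<in>G'. fst a \<notin> tree_vertices N G \<delta>} = {a\<in>G. fst a \<notin> tree_vertices N G \<delta>}"
        and d': "\<delta> \<in> roots N G'" and U': "U \<subseteq> tree_vertices N G' \<delta>"
        and lt: "in_nbrs U G' \<subset> in_nbrs U G"
        using step[OF atom G d UA p] by blast
      have sub: "tree_vertices N G \<delta> \<subseteq> ?T" using tvsub[OF fF fG ag dF] .
      have "{a\<in>G'. fst a \<in> N - ?T} = {a\<in>G. fst a \<in> N - ?T}"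
      proof -
        have "{a\<in>G'. fst a \<in> N - ?T} = {a\<in>{a\<in>G'. fst a \<notin> tree_vertices N G \<delta>}. fst a \<in> N - ?T}"
          using sub by auto
        also have "\<dots> = {a\<in>{a\<in>G. fst a \<notin> tree_vertices N G \<delta>}. fst a \<in> N - ?T}" unfolding ag' ..
        also have "\<dots> = {a\<in>G. fst a \<in> N - ?T}" using sub by auto
        finally show ?thesis .
      qed
      then have PG': "P G'" using G' d' U' ag unfolding P_def by simp
      have "card (in_nbrs U G') < n"
        using psubset_card_mono[OF finite_subset[OF in_nbrs_sub[OF fG] finN] lt] less.prems by simp
      then show ?thesis using less.IH PG' by blast
    qed
  qed
  have "P F" unfolding P_def using F dF assms(10) by auto
  then obtain G where "P G" "in_nbrs U G = {}" using ind by blast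
  then show ?thesis unfolding P_def by blast
qed

end
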